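(* Let $q$ be a power of $2$. Then in ${\rm PG}(4,q)$ there exist a set $\mathcal L$ of $q^3+1$ pairwise skew lines and a set $\mathcal P$ of $q^3+1$ planes any two of which intersect in exactly one point, such that no line of $\mathcal L$ is contained in a plane of $\mathcal P$. *)

theory Defs
  imports "HOL-Analysis.Analysis"
begin

text \<open>The projective space PG(4,F) over a field F is modelled as the lattice of
  linear subspaces of the 5-dimensional vector space F^5 (type \<open>'a^5\<close>).
  A projective subspace of projective dimension k is a linear subspace of
  vector-space dimension k+1: points (k=0), lines (k=1), planes (k=2).\<close>

definition pg_subspace :: "nat \<Rightarrow> ('a::field ^ 5) set \<Rightarrow> bool" where
  "pg_subspace k S \<longleftrightarrow> vec.subspace S \<and> vec.dim S = k + 1"

abbreviation pg_line :: "('a::field ^ 5) set \<Rightarrow> bool" where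
  "pg_line S \<equiv> pg_subspace 1 S"

abbreviation pg_plane :: "('a::field ^ 5) set \<Rightarrow> bool" where
  "pg_plane S \<equiv> pg_subspace 2 S"

definition pg_skew :: "('a::field ^ 5) set \<Rightarrow> ('a::field ^ 5) set \<Rightarrow> bool" where
  "pg_skew S T \<longleftrightarrow> S \<inter> T = {0}"

definition pg_meet_in_one_point :: "('a::field ^ 5) set \<Rightarrow> ('a::field ^ 5) set \<Rightarrow> bool" where
  "pg_meet_in_one_point S T \<longleftrightarrow> vec.dim (S \<inter> T) = 1"

end

theory Submission
  imports Defs
begin


lemma exhaust_5':
  fixes x :: 5
  shows "x = 1 \<or> x = 2 \<or> x = 3 \<or> x = 4 \<or> x = 5"
proof (induct x)
  case (of_int z)
  then have "z = 0 \<or> z = 1 \<or> z = 2 \<or> z = 3 \<or> z = 4" by fastforce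
  then show ?case by auto
qed

lemma forall_5': "(\<forall>i::5. P i) \<longleftrightarrow> P 1 \<and> P 2 \<and> P 3 \<and> P 4 \<and> P 5"
  by (metis exhaust_5')

definition mk :: "'a::field \<Rightarrow> 'a^3 \<Rightarrow> 'a \<Rightarrow> 'a^5" where
  "mk a y b = (\<chi> i. if i = 1 then a else if i = 2 then y$1 else if i = 3 then y$2 else if i = 4 then y$3 else b)"

lemma mk_comp: "mk a y b $ 1 = a" "mk a y b $ 2 = y$1" "mk a y b $ 3 = y$2" "mk a y b $ 4 = y$3" "mk a y b $ 5 = b"
  by (simp_all add: mk_def)

lemma mk_eq: "mk a y b = mk a' y' b' \<longleftrightarrow> a = a' \<and> y = y' \<and> b = b'"
  by (auto simp: vec_eq_iff forall_5' forall_3 mk_comp)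

lemma mk_add: "mk a y b + mk a' y' b' = mk (a+a') (y+y') (b+b')"
  by (auto simp: vec_eq_iff forall_5' forall_3 mk_comp)

lemma mk_scale: "c *s mk a y b = mk (c*a) (c *s y) (c*b)"
  by (auto simp: vec_eq_iff forall_5' forall_3 mk_comp)

lemma mk_eq_0: "mk a y b = 0 \<longleftrightarrow> a = 0 \<and> y = 0 \<and> b = 0"
  by (auto simp: vec_eq_iff forall_5' forall_3 mk_comp)

lemma mk_surj: "\<exists>a y b. x = mk a y b"
  apply (rule exI[of _ "x$1"], rule exI[of _ "vector [x$2, x$3, x$4]"], rule exI[of _ "x$5"])
  by (auto simp: vec_eq_iff forall_5' forall_3 mk_comp)




lemma exists_noroot:
  "\<exists>a0 a1 a2::'a::{finite,field}. \<forall>l. l^3 + a2*l^2 + a1*l + a0 \<noteq> 0"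
proof (rule ccontr)
  assume H: "\<not> ?thesis"
  define h :: "'a\<times>'a\<times>'a \<Rightarrow> 'a\<times>'a\<times>'a" where
    "h = (\<lambda>(r,x,z). (x - r, z - r*x, 0 - r*z))"
  have "\<forall>x. \<exists>y. x = h y"
  proof
    fix x :: "'a\<times>'a\<times>'a"
    obtain a b c where x: "x = (a,b,c)" by (cases x) auto
    have "\<exists>r. r^3 + a*r^2 + b*r + c = 0" using H by blast
    then obtain r where r: "r^3 + a*r^2 + b*r + c = 0" by blast
    have "h (r, a + r, b + r*(a+r)) = (a,b,c)"
    proof -
      have "c = 0 - (r * (b + r*(a+r)))" using r
        by (simp add: algebra_simps power2_eq_square power3_eq_cube eq_neg_iff_add_eq_0)
      then show ?thesis by (simp add: h_def algebra_simps)
    qed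
    then show "\<exists>y. x = h y" using x by metis
  qed
  then have "surj h" by (simp add: surj_def)
  then have "inj h" using finite_UNIV_surj_inj by (metis finite_class.finite_UNIV)
  moreover have "h (0,-1,0) = h (1,0,0)" by (simp add: h_def)
  ultimately show False by (auto dest: injD)
qed

lemma dim1:
  fixes p :: "'a::field^5"
  assumes "p \<noteq> 0"
  shows "vec.dim {t *s p | t. True} = 1"
proof -
  have e: "{t *s p | t. True} = vec.span {p}" by (auto simp: vec.span_singleton)
  have "vec.independent {p}" using assms by (simp add: vec.independent_insert)
  then show ?thesis unfolding e by (simp add: vec.dim_span_eq_card_independent)
qed

lemma dim2:
  fixes p q :: "'a::field^5"
  assumes ind: "\<And>s t. s *s p + t *s q = 0 \<Longrightarrow> s = 0 \<and> t = 0"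
  shows "vec.subspace {s *s p + t *s q | s t. True}" "vec.dim {s *s p + t *s q | s t. True} = 2"
proof -
  have e: "{s *s p + t *s q | s t. True} = vec.span {p,q}"
    by (auto simp: vec.span_insert vec.span_singleton algebra_simps)
  have q0: "q \<noteq> 0" using ind[of 0 1] by auto
  have pq: "p \<noteq> q" using ind[of 1 "-1"] by auto
  have "p \<notin> vec.span {q}"
  proof
    assume "p \<in> vec.span {q}"
    then obtain k where "p = k *s q" by (auto simp: vec.span_singleton)
    then have "1 *s p + (-k) *s q = 0" by simp
    from ind[OF this] show False by simp
  qed
  then have "vec.independent {p,q}" using q0 pq by (simp add: vec.independent_insert)
  then have "vec.dim (vec.span {p,q}) = card {p,q}" by (rule vec.dim_span_eq_card_independent)
  then show "vec.dim {s *s p + t *s q | s t. True} = 2" unfolding e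
    using pq by simp
  show "vec.subspace {s *s p + t *s q | s t. True}" unfolding e by (rule vec.subspace_span)
qed

lemma dim3:
  fixes p q r :: "'a::field^5"
  assumes ind: "\<And>s t u. s *s p + t *s q + u *s r = 0 \<Longrightarrow> s = 0 \<and> t = 0 \<and> u = 0"
  shows "vec.subspace {s *s p + t *s q + u *s r | s t u. True}" "vec.dim {s *s p + t *s q + u *s r | s t u. True} = 3"
proof -
  have e: "{s *s p + t *s q + u *s r | s t u. True} = vec.span {p,q,r}"
    by (auto simp: vec.span_insert vec.span_singleton algebra_simps)
  have r0: "r \<noteq> 0" using ind[of 0 0 1] by auto
  have qr: "q \<noteq> r" using ind[of 0 1 "-1"] by auto
  have pq: "p \<noteq> q" using ind[of 1 "-1" 0] by auto
  have pr: "p \<noteq> r" using ind[of 1 0 "-1"] by auto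
  have "q \<notin> vec.span {r}"
  proof
    assume "q \<in> vec.span {r}"
    then obtain k where "q = k *s r" by (auto simp: vec.span_singleton)
    then have "0 *s p + 1 *s q + (-k) *s r = 0" by simp
    from ind[OF this] show False by simp
  qed
  moreover have "p \<notin> vec.span {q,r}"
  proof
    assume "p \<in> vec.span {q,r}"
    then obtain k l where "p - k *s q = l *s r" by (auto simp: vec.span_insert vec.span_singleton)
    then have "1 *s p + (-k) *s q + (-l) *s r = 0" by (simp add: algebra_simps)
    from ind[OF this] show False by simp
  qed
  ultimately have "vec.independent {p,q,r}" using r0 pq pr qr by (simp add: vec.independent_insert)
  then have "vec.dim (vec.span {p,q,r}) = card {p,q,r}" by (rule vec.dim_span_eq_card_independent)
  then show "vec.dim {s *s p + t *s q + u *s r | s t u. True} = 3" unfolding e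
    using pq pr qr by simp
  show "vec.subspace {s *s p + t *s q + u *s r | s t u. True}" unfolding e by (rule vec.subspace_span)
qed




definition dot :: "'a::field^3 \<Rightarrow> 'a^3 \<Rightarrow> 'a" where
  "dot x y = x$1 * y$1 + x$2 * y$2 + x$3 * y$3"

definition cross :: "'a::field^3 \<Rightarrow> 'a^3 \<Rightarrow> 'a^3" where
  "cross a b = (\<chi> i. if i = 1 then a$2 * b$3 - a$3 * b$2 else if i = 2 then a$3 * b$1 - a$1 * b$3
       else a$1 * b$2 - a$2 * b$1)"

lemma cross_comp: "cross a b $ 1 = a$2 * b$3 - a$3 * b$2" "cross a b $ 2 = a$3 * b$1 - a$1 * b$3"
   "cross a b $ 3 = a$1 * b$2 - a$2 * b$1"
  by (simp_all add: cross_def)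

lemma dot_add_r: "dot x (y + z) = dot x y + dot x z" by (simp add: dot_def algebra_simps)
lemma dot_scale_r: "dot x (c *s y) = c * dot x y" by (simp add: dot_def algebra_simps)
lemma dot_zero_r: "dot x 0 = 0" by (simp add: dot_def)
lemma dot_diff_l: "dot (x - x') y = dot x y - dot x' y" by (simp add: dot_def algebra_simps)

lemma cross_orth: "dot a (cross a b) = 0" "dot b (cross a b) = 0"
  by (simp_all add: dot_def cross_comp algebra_simps)

lemma cross_zero_dep:
  fixes a b :: "'a::field^3"
  assumes "a \<noteq> 0" "cross a b = 0"
  shows "\<exists>l. b = l *s a"
proof -
  have c: "a$2 * b$3 = a$3 * b$2" "a$3 * b$1 = a$1 * b$3" "a$1 * b$2 = a$2 * b$1"
    using assms(2) by (auto simp: vec_eq_iff forall_3 cross_comp)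
  have "a$1 \<noteq> 0 \<or> a$2 \<noteq> 0 \<or> a$3 \<noteq> 0" using assms(1) by (auto simp: vec_eq_iff forall_3)
  then show ?thesis
  proof (elim disjE)
    assume h: "a$1 \<noteq> 0"
    show ?thesis
      apply (rule exI[of _ "b$1 / a$1"])
      using h c by (auto simp: vec_eq_iff forall_3 field_simps)
  next
    assume h: "a$2 \<noteq> 0"
    show ?thesis
      apply (rule exI[of _ "b$2 / a$2"])
      using h c by (auto simp: vec_eq_iff forall_3 field_simps)
  next
    assume h: "a$3 \<noteq> 0"
    show ?thesis
      apply (rule exI[of _ "b$3 / a$3"])
      using h c by (auto simp: vec_eq_iff forall_3 field_simps)
  qed
qed

lemma cross_cross: "cross (cross a b) y = (dot a y) *s b - (dot b y) *s a"
  by (simp add: vec_eq_iff forall_3 cross_comp dot_def algebra_simps)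

lemma perp_cross:
  fixes a b y :: "'a::field^3"
  assumes "cross a b \<noteq> 0" "dot a y = 0" "dot b y = 0"
  shows "\<exists>t. y = t *s cross a b"
  using cross_zero_dep[OF assms(1)] assms(2,3) by (simp add: cross_cross)

locale cub =
  fixes a0 a1 a2 :: "'a::field"
  assumes nr: "\<And>l. l^3 + a2 * l^2 + a1 * l + a0 \<noteq> 0"

context cub
begin

definition phi :: "'a^3 \<Rightarrow> 'a^3" where
  "phi x = (\<chi> i. if i = 1 then x$2 else if i = 2 then x$3 else - (a0 * x$1 + a1 * x$2 + a2 * x$3))"

definition psi :: "'a^3 \<Rightarrow> 'a^3" where
  "psi x = (\<chi> i. if i = 1 then - (a0 * x$3) else if i = 2 then x$1 - a1 * x$3 else x$2 - a2 * x$3)"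

lemma phi_comp: "phi x $ 1 = x$2" "phi x $ 2 = x$3" "phi x $ 3 = - (a0 * x$1 + a1 * x$2 + a2 * x$3)"
  by (simp_all add: phi_def)
lemma psi_comp: "psi x $ 1 = - (a0 * x$3)" "psi x $ 2 = x$1 - a1 * x$3" "psi x $ 3 = x$2 - a2 * x$3"
  by (simp_all add: psi_def)

lemma phi_add: "phi (x + y) = phi x + phi y"
  by (simp add: vec_eq_iff forall_3 phi_comp algebra_simps)
lemma phi_scale: "phi (c *s x) = c *s phi x"
  by (simp add: vec_eq_iff forall_3 phi_comp algebra_simps)
lemma phi_diff: "phi (x - y) = phi x - phi y"
  by (simp add: vec_eq_iff forall_3 phi_comp algebra_simps)
lemma phi_zero: "phi 0 = 0"
  by (simp add: vec_eq_iff forall_3 phi_comp)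

lemma dot_phi: "dot d (phi y) = dot (psi d) y"
  by (simp add: dot_def phi_comp psi_comp algebra_simps)

lemma a0_nz: "a0 \<noteq> 0" using nr[of 0] by simp

lemma phi_eig: assumes "phi d = l *s d" shows "d = 0"
proof -
  have e: "d$2 = l * d$1" "d$3 = l * d$2" "- (a0 * d$1 + a1 * d$2 + a2 * d$3) = l * d$3"
    using assms by (auto simp: vec_eq_iff forall_3 phi_comp)
  have "d$1 * (l^3 + a2 * l^2 + a1 * l + a0) = 0"
    using e by (simp add: algebra_simps power2_eq_square power3_eq_cube) (metis add.commute add_eq_0_iff)
  then have "d$1 = 0" using nr by simp
  then show ?thesis using e by (simp add: vec_eq_iff forall_3)
qed

lemma psi_eig: assumes "psi d = l *s d" shows "d = 0"
proof -
  have e: "- (a0 * d$3) = l * d$1" "d$1 - a1 * d$3 = l * d$2" "d$2 - a2 * d$3 = l * d$3"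
    using assms by (auto simp: vec_eq_iff forall_3 psi_comp)
  have "d$3 * (l^3 + a2 * l^2 + a1 * l + a0) = 0"
  proof -
    have d2: "d$2 = (l + a2) * d$3" using e(3) by (simp add: algebra_simps)
    have d1: "d$1 = (l * l + a2 * l + a1) * d$3" using e(2) d2 by (simp add: algebra_simps)
    show ?thesis using e(1) d1 by (simp add: algebra_simps power2_eq_square power3_eq_cube) (metis add.commute add_eq_0_iff)
  qed
  then have "d$3 = 0" using nr by simp
  then show ?thesis using e by (simp add: vec_eq_iff forall_3)
qed

end



lemma vec3_expand: "(y::'a::field^3) = y$1 *s axis 1 1 + y$2 *s axis 2 1 + y$3 *s axis 3 1"
  by (simp add: vec_eq_iff forall_3 axis_def)

context cub
begin

definition Lu :: "'a^3 \<Rightarrow> ('a^5) set" where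
  "Lu u = {c *s mk 1 u 0 + d *s mk 0 (phi u) 1 | c d. True}"

definition w :: "'a \<Rightarrow> 'a \<Rightarrow> 'a^3" where
  "w z1 z2 = z1 *s axis 1 1 + z2 *s phi (axis 1 1)"

definition zz :: "'a option \<Rightarrow> 'a \<times> 'a" where
  "zz k = (case k of None \<Rightarrow> (0,1) | Some t \<Rightarrow> (1,t))"

definition Mz :: "'a option \<Rightarrow> ('a^5) set" where
  "Mz k = {c *s mk (fst (zz k)) 0 (snd (zz k)) + d *s mk 0 (w (fst (zz k)) (snd (zz k))) 0 | c d. True}"

definition G :: "'a^3 \<Rightarrow> 'a^3 \<Rightarrow> 'a^5" where
  "G v y = mk (dot v (phi y) - dot v y) y (dot v (phi y))"

definition Pv :: "'a^3 \<Rightarrow> ('a^5) set" where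
  "Pv v = {c *s G v (axis 1 1) + d *s G v (axis 2 1) + e *s G v (axis 3 1) | c d e. True}"

definition Pinf :: "('a^5) set" where
  "Pinf = {c *s mk 1 0 0 + d *s mk 0 0 1 + e *s mk 0 (axis 2 1) 0 | c d e. True}"

lemma Lu_mem: "x \<in> Lu u \<longleftrightarrow> (\<exists>c d. x = mk c (c *s u + d *s phi u) d)"
  by (simp add: Lu_def mk_add mk_scale)

lemma Mz_mem: "zz k = (z1, z2) \<Longrightarrow> x \<in> Mz k \<longleftrightarrow> (\<exists>c d. x = mk (c * z1) (d *s w z1 z2) (c * z2))"
  by (simp add: Mz_def mk_add mk_scale)

lemma G_add: "G v (y + y') = G v y + G v y'"
  by (simp add: G_def mk_add phi_add dot_add_r algebra_simps)
lemma G_scale: "G v (c *s y) = c *s G v y"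
  by (simp add: G_def mk_scale phi_scale dot_scale_r algebra_simps)

lemma Pv_mem: "x \<in> Pv v \<longleftrightarrow> (\<exists>y. x = G v y)"
proof
  assume "x \<in> Pv v"
  then obtain c d e where "x = c *s G v (axis 1 1) + d *s G v (axis 2 1) + e *s G v (axis 3 1)"
    by (auto simp: Pv_def)
  then have "x = G v (c *s axis 1 1 + d *s axis 2 1 + e *s axis 3 1)" by (simp add: G_add G_scale)
  then show "\<exists>y. x = G v y" by blast
next
  assume "\<exists>y. x = G v y"
  then obtain y where "x = G v y" by blast
  then have "x = y$1 *s G v (axis 1 1) + y$2 *s G v (axis 2 1) + y$3 *s G v (axis 3 1)"
    by (metis G_add G_scale vec3_expand)
  then show "x \<in> Pv v" by (auto simp: Pv_def)
qed

lemma Pinf_mem: "x \<in> Pinf \<longleftrightarrow> (\<exists>c d e. x = mk c (e *s axis 2 1) d)"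
  by (simp add: Pinf_def mk_add mk_scale)

lemma zz_nz: "zz k \<noteq> (0,0)" by (cases k) (auto simp: zz_def)

lemma w_comp: "w z1 z2 $ 1 = z1" "w z1 z2 $ 2 = 0" "w z1 z2 $ 3 = - (a0 * z2)"
  by (simp_all add: w_def phi_comp axis_def)

lemma w_nz: "zz k = (z1,z2) \<Longrightarrow> w z1 z2 \<noteq> 0"
  using zz_nz[of k] a0_nz by (auto simp: vec_eq_iff forall_3 w_comp)

lemma nonprop:
  assumes "k \<noteq> k'" "zz k = (z1,z2)" "zz k' = (z1',z2')" "c * z1 = c' * z1'" "c * z2 = c' * z2'"
  shows "c = 0 \<and> c' = 0"
  using assms by (cases k; cases k') (auto simp: zz_def algebra_simps)

end



context cub
begin

lemma phi_indep:
  assumes "dl \<noteq> 0" "c *s dl + d *s phi dl = 0"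
  shows "c = 0 \<and> d = 0"
proof -
  have cd: "c * dl$i + d * phi dl $ i = 0" for i using assms(2) by (simp add: vec_eq_iff)
  have "d = 0"
  proof (rule ccontr)
    assume "d \<noteq> 0"
    then have "phi dl = (- c / d) *s dl" using cd by (simp add: vec_eq_iff field_simps) (metis add_eq_0_iff mult.commute)
    then show False using phi_eig assms(1) by blast
  qed
  then have "c *s dl = 0" using assms(2) by simp
  then show ?thesis using assms(1) \<open>d = 0\<close> by (simp add: vec_eq_iff) (metis vec_eq_iff zero_index)
qed

lemma mk0: "mk 0 0 0 = 0" by (simp add: mk_eq_0)

lemma skew_LL:
  assumes "u \<noteq> u'"
  shows "Lu u \<inter> Lu u' = {0}"
proof
  show "{0} \<subseteq> Lu u \<inter> Lu u'" by (auto simp: Lu_mem intro!: exI[of _ 0] simp: mk0)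
  show "Lu u \<inter> Lu u' \<subseteq> {0}"
  proof
    fix x assume xx: "x \<in> Lu u \<inter> Lu u'"
    then obtain c d where x: "x = mk c (c *s u + d *s phi u) d" by (auto simp: Lu_mem)
    obtain c' d' where x': "x = mk c' (c' *s u' + d' *s phi u') d'" using xx by (auto simp: Lu_mem)
    then have e: "c = c'" "d = d'" "c *s u + d *s phi u = c' *s u' + d' *s phi u'" using x x' by (auto simp: mk_eq)
    have "c *s (u - u') + d *s phi (u - u') = 0"
      using e by (simp add: phi_diff vec_eq_iff algebra_simps)
    then have "c = 0 \<and> d = 0" by (rule phi_indep[rotated]) (use assms in simp)
    then show "x \<in> {0}" using x by (simp add: mk0)
  qed
qed

lemma skew_LM:
  assumes "\<forall>c. u \<noteq> c *s axis 1 1"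
  shows "Lu u \<inter> Mz k = {0}"
proof
  obtain z1 z2 where z: "zz k = (z1,z2)" by (cases "zz k") auto
  show "{0} \<subseteq> Lu u \<inter> Mz k" using z
    by (auto simp: Lu_mem Mz_mem[OF z] intro!: exI[of _ 0] simp: mk0)
  show "Lu u \<inter> Mz k \<subseteq> {0}"
  proof
    fix x assume xx: "x \<in> Lu u \<inter> Mz k"
    then obtain c d where x: "x = mk c (c *s u + d *s phi u) d" by (auto simp: Lu_mem)
    obtain l m where x': "x = mk (l * z1) (m *s w z1 z2) (l * z2)" using xx by (auto simp: Mz_mem[OF z])
    have e: "c = l * z1" "d = l * z2" "c *s u + d *s phi u = m *s w z1 z2" using x x' by (auto simp: mk_eq)
    show "x \<in> {0}"
    proof (cases "l = 0")
      case True
      then show ?thesis using x e by (simp add: mk0)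
    next
      case False
      define dl where "dl = u - (m / l) *s axis 1 1"
      have "dl \<noteq> 0" using assms unfolding dl_def by (metis eq_iff_diff_eq_0)
      moreover have "z1 *s dl + z2 *s phi dl = 0"
      proof -
        have "(l * z1) *s u + (l * z2) *s phi u = m *s w z1 z2" using e by simp
        then have h: "\<And>i. (l * z1) * u$i + (l * z2) * phi u $ i = m * w z1 z2 $ i"
          by (simp add: vec_eq_iff)
        have h3: "l * ((l * z1) * u$3 + (l * z2) * phi u $ 3) = l * (m * w z1 z2 $ 3)" using h[of 3] by simp
        show ?thesis using False h[of 1] h[of 2] h3
          by (simp add: vec_eq_iff forall_3 dl_def phi_comp w_comp axis_def field_simps)
      qed
      ultimately have "z1 = 0 \<and> z2 = 0" using phi_indep by blast
      then show ?thesis using zz_nz[of k] z by simp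
    qed
  qed
qed

lemma skew_MM:
  assumes "k \<noteq> k'"
  shows "Mz k \<inter> Mz k' = {0}"
proof
  obtain z1 z2 where z: "zz k = (z1,z2)" by (cases "zz k") auto
  obtain z1' z2' where z': "zz k' = (z1',z2')" by (cases "zz k'") auto
  show "{0} \<subseteq> Mz k \<inter> Mz k'" using z z'
    by (auto simp: Mz_mem[OF z] Mz_mem[OF z'] intro!: exI[of _ 0] simp: mk0)
  show "Mz k \<inter> Mz k' \<subseteq> {0}"
  proof
    fix x assume xx: "x \<in> Mz k \<inter> Mz k'"
    then obtain c d where x: "x = mk (c * z1) (d *s w z1 z2) (c * z2)" by (auto simp: Mz_mem[OF z])
    obtain c' d' where x': "x = mk (c' * z1') (d' *s w z1' z2') (c' * z2')" using xx by (auto simp: Mz_mem[OF z'])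
    have e: "c * z1 = c' * z1'" "c * z2 = c' * z2'" "d *s w z1 z2 = d' *s w z1' z2'" using x x' by (auto simp: mk_eq)
    have "c = 0" using nonprop[OF assms z z' e(1) e(2)] by simp
    have f: "d * z1 = d' * z1'" "d * (a0 * z2) = d' * (a0 * z2')"
      using e(3) by (auto simp: vec_eq_iff forall_3 w_comp)
    have "d * z2 = d' * z2'" using f(2) a0_nz by (simp add: algebra_simps)
    then have "d = 0" using nonprop[OF assms z z' f(1)] by simp
    show "x \<in> {0}" using x \<open>c = 0\<close> \<open>d = 0\<close> by (simp add: mk0)
  qed
qed

lemma notsub_LP: "\<not> Lu u \<subseteq> Pv v"
proof
  assume h: "Lu u \<subseteq> Pv v"
  have "mk 1 u 0 \<in> Lu u" unfolding Lu_mem by (rule exI[of _ 1], rule exI[of _ 0]) simp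
  with h have "mk 1 u 0 \<in> Pv v" by blast
  then obtain y where y: "mk 1 u 0 = G v y" unfolding Pv_mem by blast
  have "mk 0 (phi u) 1 \<in> Lu u" unfolding Lu_mem by (rule exI[of _ 0], rule exI[of _ 1]) simp
  with h have "mk 0 (phi u) 1 \<in> Pv v" by blast
  then obtain y' where y': "mk 0 (phi u) 1 = G v y'" unfolding Pv_mem by blast
  from y have a: "dot v (phi u) = 0" by (auto simp: G_def mk_eq)
  from y' have b: "dot v (phi (phi u)) - dot v (phi u) = 0" "dot v (phi (phi u)) = 1"
    by (auto simp: G_def mk_eq)
  from a b show False by simp
qed

lemma notsub_LPinf:
  assumes "\<forall>c. u \<noteq> c *s axis 1 1"
  shows "\<not> Lu u \<subseteq> Pinf"
proof
  assume h: "Lu u \<subseteq> Pinf"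
  have "mk 1 u 0 \<in> Lu u" unfolding Lu_mem by (rule exI[of _ 1], rule exI[of _ 0]) simp
  with h have "mk 1 u 0 \<in> Pinf" by blast
  then obtain e where y: "u = e *s axis 2 1" unfolding Pinf_mem mk_eq by blast
  have "mk 0 (phi u) 1 \<in> Lu u" unfolding Lu_mem by (rule exI[of _ 0], rule exI[of _ 1]) simp
  with h have "mk 0 (phi u) 1 \<in> Pinf" by blast
  then obtain e' where y': "phi u = e' *s axis 2 1" unfolding Pinf_mem mk_eq by blast
  have "e = 0" using y y' by (auto simp: vec_eq_iff forall_3 phi_comp axis_def)
  then have "u = 0 *s axis 1 1" using y by simp
  then show False using assms by blast
qed

lemma notsub_MP: "\<not> Mz k \<subseteq> Pv v"
proof
  assume h: "Mz k \<subseteq> Pv v"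
  obtain z1 z2 where z: "zz k = (z1,z2)" by (cases "zz k") auto
  have "mk z1 0 z2 \<in> Mz k" unfolding Mz_mem[OF z] by (rule exI[of _ 1], rule exI[of _ 0]) simp
  with h have "mk z1 0 z2 \<in> Pv v" by blast
  then obtain y where y: "mk z1 0 z2 = G v y" unfolding Pv_mem by blast
  then have "z1 = 0" "z2 = 0" by (auto simp: G_def mk_eq phi_zero dot_zero_r)
  then show False using zz_nz[of k] z by simp
qed

lemma notsub_MPinf: "\<not> Mz k \<subseteq> Pinf"
proof
  assume h: "Mz k \<subseteq> Pinf"
  obtain z1 z2 where z: "zz k = (z1,z2)" by (cases "zz k") auto
  have "mk 0 (w z1 z2) 0 \<in> Mz k" unfolding Mz_mem[OF z] by (rule exI[of _ 0], rule exI[of _ 1]) simp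
  with h have "mk 0 (w z1 z2) 0 \<in> Pinf" by blast
  then obtain e where y: "w z1 z2 = e *s axis 2 1" unfolding Pinf_mem mk_eq by blast
  then have "z1 = 0" "a0 * z2 = 0" by (auto simp: vec_eq_iff forall_3 w_comp axis_def)
  then show False using zz_nz[of k] z a0_nz by simp
qed

end



context cub
begin

lemma G_inj: "G v y = G v' y' \<Longrightarrow> y = y'" by (simp add: G_def mk_eq)
lemma G_nz: "y \<noteq> 0 \<Longrightarrow> G v y \<noteq> 0" by (simp add: G_def mk_eq_0)

lemma meet_PP:
  assumes "v \<noteq> v'"
  shows "vec.dim (Pv v \<inter> Pv v') = 1"
proof -
  define dl where "dl = v - v'"
  have dl0: "dl \<noteq> 0" using assms by (simp add: dl_def)
  define cc where "cc = cross dl (psi dl)"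
  have cc0: "cc \<noteq> 0"
  proof
    assume "cc = 0"
    then obtain l where "psi dl = l *s dl" using cross_zero_dep[OF dl0] by (auto simp: cc_def)
    then show False using psi_eig dl0 by blast
  qed
  have o1: "dot dl cc = 0" and o2: "dot (psi dl) cc = 0" using cross_orth by (auto simp: cc_def)
  have "Pv v \<inter> Pv v' = {t *s G v cc | t. True}"
  proof
    show "Pv v \<inter> Pv v' \<subseteq> {t *s G v cc | t. True}"
    proof
      fix x assume xx: "x \<in> Pv v \<inter> Pv v'"
      then obtain y where y: "x = G v y" by (auto simp: Pv_mem)
      obtain y' where y': "x = G v' y'" using xx by (auto simp: Pv_mem)
      have yy: "y = y'" using y y' G_inj by metis
      have e: "dot v (phi y) - dot v y = dot v' (phi y) - dot v' y" "dot v (phi y) = dot v' (phi y)"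
        using y y' yy by (auto simp: G_def mk_eq)
      have "dot dl y = 0" using e by (simp add: dl_def dot_diff_l)
      moreover have "dot (psi dl) y = 0" using e by (simp add: dl_def dot_diff_l flip: dot_phi)
      ultimately obtain t where "y = t *s cc" using perp_cross[of dl "psi dl" y] cc0 by (auto simp: cc_def)
      then show "x \<in> {t *s G v cc | t. True}" using y by (auto simp: G_scale)
    qed
    show "{t *s G v cc | t. True} \<subseteq> Pv v \<inter> Pv v'"
    proof
      fix x assume "x \<in> {t *s G v cc | t. True}"
      then obtain t where x: "x = t *s G v cc" by blast
      have a: "dot v cc = dot v' cc" using o1 by (simp add: dl_def dot_diff_l)
      have b: "dot v (phi cc) = dot v' (phi cc)" using o2 by (simp add: dl_def dot_diff_l flip: dot_phi)
      have "G v cc = G v' cc" using a b by (simp add: G_def)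
      then have "x = G v (t *s cc)" "x = G v' (t *s cc)" using x by (simp_all add: G_scale)
      then show "x \<in> Pv v \<inter> Pv v'" by (simp only: Int_iff Pv_mem) (intro conjI exI[of _ "t *s cc"]; simp)
    qed
  qed
  then show ?thesis using dim1[OF G_nz[OF cc0, of v]] by simp
qed

lemma meet_PPinf: "vec.dim (Pv v \<inter> Pinf) = 1"
proof -
  have "Pv v \<inter> Pinf = {t *s G v (axis 2 1) | t. True}"
  proof
    show "Pv v \<inter> Pinf \<subseteq> {t *s G v (axis 2 1) | t. True}"
    proof
      fix x assume xx: "x \<in> Pv v \<inter> Pinf"
      then obtain y where y: "x = G v y" by (auto simp: Pv_mem)
      obtain c d e where x': "x = mk c (e *s axis 2 1) d" using xx by (auto simp: Pinf_mem)
      have "y = e *s axis 2 1" using y x' by (simp add: G_def mk_eq)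
      then show "x \<in> {t *s G v (axis 2 1) | t. True}" using y by (auto simp: G_scale)
    qed
    show "{t *s G v (axis 2 1) | t. True} \<subseteq> Pv v \<inter> Pinf"
    proof
      fix x assume "x \<in> {t *s G v (axis 2 1) | t. True}"
      then obtain t where x: "x = t *s G v (axis 2 1)" by blast
      then have "x = G v (t *s axis 2 1)" by (simp add: G_scale)
      then show "x \<in> Pv v \<inter> Pinf" by (auto simp: Pv_mem Pinf_mem G_def)
    qed
  qed
  moreover have "axis 2 1 \<noteq> (0::'a^3)" by (simp add: axis_eq_0_iff)
  ultimately show ?thesis using dim1[OF G_nz[of "axis 2 1" v]] by simp
qed

lemma line_L: "pg_line (Lu u)"
proof -
  have "\<And>c d. c *s mk 1 u 0 + d *s mk 0 (phi u) 1 = 0 \<Longrightarrow> c = 0 \<and> d = 0"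
    by (simp add: mk_add mk_scale mk_eq_0)
  from dim2[OF this] show ?thesis by (simp add: pg_subspace_def Lu_def)
qed

lemma line_M: "pg_line (Mz k)"
proof -
  obtain z1 z2 where z: "zz k = (z1,z2)" by (cases "zz k") auto
  have "\<And>c d. c *s mk z1 0 z2 + d *s mk 0 (w z1 z2) 0 = 0 \<Longrightarrow> c = 0 \<and> d = 0"
    using zz_nz[of k] z w_nz[OF z] by (auto simp: mk_add mk_scale mk_eq_0)
  from dim2[OF this] show ?thesis by (simp add: pg_subspace_def Mz_def z)
qed

lemma plane_P: "pg_plane (Pv v)"
proof -
  have "\<And>c d e. c *s G v (axis 1 1) + d *s G v (axis 2 1) + e *s G v (axis 3 1) = 0 \<Longrightarrow> c = 0 \<and> d = 0 \<and> e = 0"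
  proof -
    fix c d e
    assume "c *s G v (axis 1 1) + d *s G v (axis 2 1) + e *s G v (axis 3 1) = 0"
    then have "G v (c *s axis 1 1 + d *s axis 2 1 + e *s axis 3 1) = 0" by (simp add: G_add G_scale)
    then have "c *s axis 1 1 + d *s axis 2 1 + e *s axis 3 1 = (0::'a^3)" using G_nz by blast
    then show "c = 0 \<and> d = 0 \<and> e = 0" by (simp add: vec_eq_iff forall_3 axis_def)
  qed
  from dim3[OF this] show ?thesis by (simp add: pg_subspace_def Pv_def)
qed

lemma plane_Pinf: "pg_plane Pinf"
proof -
  have "\<And>c d e. c *s mk 1 0 0 + d *s mk 0 0 1 + e *s mk 0 (axis 2 1) 0 = (0::'a^5) \<Longrightarrow> c = 0 \<and> d = 0 \<and> e = 0"
  proof -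
    fix c d e
    assume "c *s mk 1 0 0 + d *s mk 0 0 1 + e *s mk 0 (axis 2 1) 0 = (0::'a^5)"
    then have "mk c (e *s axis 2 1) d = 0" by (simp add: mk_add mk_scale)
    then have h: "c = 0" "d = 0" "e *s axis 2 1 = (0::'a^3)" by (simp_all only: mk_eq_0)
    from h(3) have "(e *s axis 2 1) $ 2 = (0::'a)" by simp
    then have "e = 0" by (simp add: axis_def)
    then show "c = 0 \<and> d = 0 \<and> e = 0" using h by simp
  qed
  from dim3[OF this] show ?thesis by (simp add: pg_subspace_def Pinf_def)
qed

end



lemma card_option_UNIV: "card (UNIV :: ('a::finite) option set) = CARD('a) + 1"
proof -
  have "(UNIV :: 'a option set) = insert None (range Some)" by (auto intro: option.exhaust)
  moreover have "card (range (Some :: 'a \<Rightarrow> _)) = CARD('a)" by (simp add: card_image)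
  ultimately show ?thesis by simp
qed

lemma main:
  assumes "cub (a0::'a::{finite,field}) a1 a2"
  shows "\<exists>(\<L> :: ('a ^ 5) set set) (\<P> :: ('a ^ 5) set set).
           card \<L> = CARD('a) ^ 3 + 1 \<and> card \<P> = CARD('a) ^ 3 + 1 \<and>
           (\<forall>L\<in>\<L>. pg_line L) \<and> (\<forall>P\<in>\<P>. pg_plane P) \<and>
           (\<forall>L1\<in>\<L>. \<forall>L2\<in>\<L>. L1 \<noteq> L2 \<longrightarrow> pg_skew L1 L2) \<and>
           (\<forall>P1\<in>\<P>. \<forall>P2\<in>\<P>. P1 \<noteq> P2 \<longrightarrow> pg_meet_in_one_point P1 P2) \<and>
           (\<forall>L\<in>\<L>. \<forall>P\<in>\<P>. \<not> L \<subseteq> P)"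
proof -
  interpret cub a0 a1 a2 by fact
  define U where "U = {u::'a^3. \<forall>c. u \<noteq> c *s axis 1 1}"
  define LL where "LL = Lu ` U \<union> range Mz"
  define PP where "PP = range Pv \<union> {Pinf}"
  have Lnz: "mk 1 u 0 \<in> Lu u \<and> mk 1 u 0 \<noteq> 0" for u
  proof
    show "mk 1 u 0 \<in> Lu u" unfolding Lu_mem by (rule exI[of _ 1], rule exI[of _ 0]) simp
    show "mk 1 u 0 \<noteq> 0" by (simp only: mk_eq_0) simp
  qed
  have Mnz: "\<exists>x. x \<in> Mz k \<and> x \<noteq> 0" for k
  proof -
    obtain z1 z2 where z: "zz k = (z1,z2)" by (cases "zz k") auto
    have "mk 0 (w z1 z2) 0 \<in> Mz k" unfolding Mz_mem[OF z] by (rule exI[of _ 0], rule exI[of _ 1]) simp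
    moreover have "mk 0 (w z1 z2) 0 \<noteq> 0" using w_nz[OF z] by (simp add: mk_eq_0)
    ultimately show ?thesis by blast
  qed
  have injL: "inj_on Lu U"
  proof (rule inj_onI)
    fix u u' assume "u \<in> U" "u' \<in> U" "Lu u = Lu u'"
    show "u = u'"
    proof (rule ccontr)
      assume "u \<noteq> u'"
      then have "Lu u = {0}" using skew_LL[OF \<open>u \<noteq> u'\<close>] \<open>Lu u = Lu u'\<close> by simp
      then show False using Lnz[of u] by auto
    qed
  qed
  have injM: "inj Mz"
  proof (rule injI)
    fix k k' assume "Mz k = Mz k'"
    show "k = k'"
    proof (rule ccontr)
      assume "k \<noteq> k'"
      then have "Mz k = {0}" using skew_MM[OF \<open>k \<noteq> k'\<close>] \<open>Mz k = Mz k'\<close> by simp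
      then show False using Mnz[of k] by auto
    qed
  qed
  have disj: "Lu ` U \<inter> range Mz = {}"
  proof (rule ccontr)
    assume "Lu ` U \<inter> range Mz \<noteq> {}"
    then obtain u k where "u \<in> U" "Lu u = Mz k" by auto
    then have "Lu u = {0}" using skew_LM[of u k] by (auto simp: U_def)
    then show False using Lnz[of u] by auto
  qed
  have cardR: "card (range (\<lambda>c::'a. c *s (axis 1 1 :: 'a^3))) = CARD('a)"
  proof (rule card_image)
    show "inj_on (\<lambda>c::'a. c *s (axis 1 1 :: 'a^3)) UNIV"
    proof (rule inj_onI)
      fix c c' :: 'a assume "c *s (axis 1 1 :: 'a^3) = c' *s axis 1 1"
      then have "(c *s (axis 1 1 :: 'a^3)) $ 1 = (c' *s axis 1 1) $ 1" by simp
      then show "c = c'" by (simp add: axis_def)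
    qed
  qed
  have "U = UNIV - range (\<lambda>c::'a. c *s (axis 1 1 :: 'a^3))" by (auto simp: U_def)
  then have cardU: "card U = CARD('a)^3 - CARD('a)"
    using cardR by (simp add: card_Diff_subset)
  have q1: "1 \<le> CARD('a)" by (simp add: Suc_leI)
  then have "1 \<le> CARD('a) * CARD('a)" using mult_le_mono[OF q1 q1] by simp
  then have "CARD('a) * 1 \<le> CARD('a) * (CARD('a) * CARD('a))" by (rule mult_le_mono2)
  then have q3: "CARD('a) \<le> CARD('a)^3" by (simp add: power3_eq_cube)
  have cardLL: "card LL = CARD('a)^3 + 1"
  proof -
    have "card LL = card (Lu ` U) + card (range Mz)" unfolding LL_def
      using disj by (simp add: card_Un_disjoint)
    also have "\<dots> = (CARD('a)^3 - CARD('a)) + (CARD('a) + 1)"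
      using injL injM cardU by (simp add: card_image card_option_UNIV)
    also have "\<dots> = CARD('a)^3 + 1" using q3 by simp
    finally show ?thesis .
  qed
  have injP: "inj Pv"
  proof (rule injI)
    fix v v' assume e: "Pv v = Pv v'"
    show "v = v'"
    proof (rule ccontr)
      assume "v \<noteq> v'"
      then have "vec.dim (Pv v) = 1" using meet_PP[OF \<open>v \<noteq> v'\<close>] e by simp
      then show False using plane_P[of v] by (simp add: pg_subspace_def)
    qed
  qed
  have Pinf_notin: "Pinf \<notin> range Pv"
  proof
    assume "Pinf \<in> range Pv"
    then obtain v where "Pinf = Pv v" by auto
    then have "vec.dim (Pv v) = 1" using meet_PPinf[of v] by simp
    then show False using plane_P[of v] by (simp add: pg_subspace_def)
  qed
  have cardPP: "card PP = CARD('a)^3 + 1"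
    unfolding PP_def using Pinf_notin injP by (simp add: card_image)
  show ?thesis
  proof (intro exI conjI)
    show "card LL = CARD('a)^3 + 1" by (rule cardLL)
    show "card PP = CARD('a)^3 + 1" by (rule cardPP)
    show "\<forall>L\<in>LL. pg_line L" unfolding LL_def using line_L line_M by auto
    show "\<forall>P\<in>PP. pg_plane P" unfolding PP_def using plane_P plane_Pinf by auto
    show "\<forall>L1\<in>LL. \<forall>L2\<in>LL. L1 \<noteq> L2 \<longrightarrow> pg_skew L1 L2"
    proof (intro ballI impI)
      fix L1 L2 assume h1: "L1 \<in> LL" and h2: "L2 \<in> LL" and ne: "L1 \<noteq> L2"
      show "pg_skew L1 L2"
      proof (cases "L1 \<in> Lu ` U")
        case True
        then obtain u where u: "u \<in> U" "L1 = Lu u" by blast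
        show ?thesis
        proof (cases "L2 \<in> Lu ` U")
          case True
          then obtain u' where u': "L2 = Lu u'" by blast
          then have "u \<noteq> u'" using u ne by blast
          then show ?thesis using skew_LL u u' by (simp add: pg_skew_def pg_meet_in_one_point_def)
        next
          case False
          then obtain k where "L2 = Mz k" using h2 unfolding LL_def by blast
          then show ?thesis using u skew_LM[of u k] by (simp add: U_def pg_skew_def)
        qed
      next
        case False
        then obtain k where k: "L1 = Mz k" using h1 unfolding LL_def by blast
        show ?thesis
        proof (cases "L2 \<in> Lu ` U")
          case True
          then obtain u where u: "u \<in> U" "L2 = Lu u" by blast
          then show ?thesis using k skew_LM[of u k] by (simp add: U_def Int_commute pg_skew_def)
        next
          case False
          then obtain k' where k': "L2 = Mz k'" using h2 unfolding LL_def by blast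
          then have "k \<noteq> k'" using k ne by blast
          then show ?thesis using skew_MM k k' by (simp add: pg_skew_def pg_meet_in_one_point_def)
        qed
      qed
    qed
    show "\<forall>P1\<in>PP. \<forall>P2\<in>PP. P1 \<noteq> P2 \<longrightarrow> pg_meet_in_one_point P1 P2"
    proof (intro ballI impI)
      fix P1 P2 assume h1: "P1 \<in> PP" and h2: "P2 \<in> PP" and ne: "P1 \<noteq> P2"
      show "pg_meet_in_one_point P1 P2"
      proof (cases "P1 = Pinf")
        case True
        then obtain v where "P2 = Pv v" using h2 ne unfolding PP_def by blast
        then show ?thesis using True meet_PPinf[of v] by (simp add: Int_commute pg_meet_in_one_point_def)
      next
        case False
        then obtain v where v: "P1 = Pv v" using h1 unfolding PP_def by blast
        show ?thesis
        proof (cases "P2 = Pinf")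
          case True
          then show ?thesis using v meet_PPinf[of v] by (simp add: pg_skew_def pg_meet_in_one_point_def)
        next
          case False
          then obtain v' where v': "P2 = Pv v'" using h2 unfolding PP_def by blast
          then have "v \<noteq> v'" using v ne by blast
          then show ?thesis using meet_PP v v' by (simp add: pg_skew_def pg_meet_in_one_point_def)
        qed
      qed
    qed
    show "\<forall>L\<in>LL. \<forall>P\<in>PP. \<not> L \<subseteq> P"
    proof (intro ballI)
      fix L P assume h1: "L \<in> LL" and h2: "P \<in> PP"
      show "\<not> L \<subseteq> P"
      proof (cases "L \<in> Lu ` U")
        case True
        then obtain u where u: "u \<in> U" "L = Lu u" by blast
        show ?thesis
        proof (cases "P = Pinf")
          case True
          then show ?thesis using u notsub_LPinf[of u] by (simp add: U_def)
        next
          case False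
          then obtain v where "P = Pv v" using h2 unfolding PP_def by blast
          then show ?thesis using u notsub_LP by simp
        qed
      next
        case False
        then obtain k where k: "L = Mz k" using h1 unfolding LL_def by blast
        show ?thesis
        proof (cases "P = Pinf")
          case True
          then show ?thesis using k notsub_MPinf by simp
        next
          case False
          then obtain v where "P = Pv v" using h2 unfolding PP_def by blast
          then show ?thesis using k notsub_MP by simp
        qed
      qed
    qed
  qed
qed

theorem theorem3p9:
  fixes q n :: nat
  assumes "q = 2 ^ n" and "n \<ge> 1"
    and "CARD('a::{finite,field}) = q"
  shows "\<exists>(\<L> :: ('a ^ 5) set set) (\<P> :: ('a ^ 5) set set).
           card \<L> = q ^ 3 + 1 \<and> card \<P> = q ^ 3 + 1 \<and>
           (\<forall>L\<in>\<L>. pg_line L) \<and> (\<forall>P\<in>\<P>. pg_plane P) \<and>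
           (\<forall>L1\<in>\<L>. \<forall>L2\<in>\<L>. L1 \<noteq> L2 \<longrightarrow> pg_skew L1 L2) \<and>
           (\<forall>P1\<in>\<P>. \<forall>P2\<in>\<P>. P1 \<noteq> P2 \<longrightarrow> pg_meet_in_one_point P1 P2) \<and>
           (\<forall>L\<in>\<L>. \<forall>P\<in>\<P>. \<not> L \<subseteq> P)"
proof -
  obtain a0 a1 a2 :: 'a where "\<forall>l. l^3 + a2*l^2 + a1*l + a0 \<noteq> 0" using exists_noroot by blast
  then have "cub a0 a1 a2" by (unfold_locales) blast
  from main[OF this] show ?thesis using assms(3) by simp
qed


end
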